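(* Let $U$ be a $d\times d$ unitary matrix. Then there exist a traceless Hermitian matrix $H$ and a phase $\phi\in\mathbb R$ such that $e^{-iH}=e^{i\phi}U$ (i.e. $d(U,e^{-iH})=0$), and moreover $\|H\|\le\pi\|I-U\|$ simultaneously for every unitarily invariant norm $\|\cdot\|$.
   Context: $d(U,V):=\min_{\phi\in\mathbb R}\|U-e^{i\phi}V\|$. A norm $\|\cdot\|$ on $d\times d$ matrices is unitarily invariant if $\|WAV\|=\|A\|$ for all unitaries $W,V$. *)

theory Defs
  imports "HOL-Analysis.Analysis"
begin

text \<open>d x d complex matrices are modelled as complex^'n^'n with d = CARD('n).\<close>

definition cmat_smult :: "complex \<Rightarrow> complex^'n^'m \<Rightarrow> complex^'n^'m" where
  "cmat_smult c A = (\<chi> i j. c * A $ i $ j)"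

definition cadjoint :: "complex^'n^'m \<Rightarrow> complex^'m^'n" where
  "cadjoint A = (\<chi> i j. cnj (A $ j $ i))"

definition cunitary :: "complex^'n^'n \<Rightarrow> bool" where
  "cunitary U \<longleftrightarrow> cadjoint U ** U = mat 1 \<and> U ** cadjoint U = mat 1"

definition chermitian :: "complex^'n^'n \<Rightarrow> bool" where
  "chermitian H \<longleftrightarrow> cadjoint H = H"

fun mpow :: "complex^'n^'n \<Rightarrow> nat \<Rightarrow> complex^'n^'n" where
  "mpow A 0 = mat 1"
| "mpow A (Suc k) = A ** mpow A k"

definition mexp :: "complex^'n^'n \<Rightarrow> complex^'n^'n" where
  "mexp A = (\<Sum>k. (1 / fact k) *\<^sub>R mpow A k)"

definition unitarily_invariant_norm :: "(complex^'n^'n \<Rightarrow> real) \<Rightarrow> bool" where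
  "unitarily_invariant_norm N \<longleftrightarrow>
     (\<forall>A. 0 \<le> N A) \<and>
     (\<forall>A. N A = 0 \<longleftrightarrow> A = 0) \<and>
     (\<forall>c A. N (cmat_smult c A) = cmod c * N A) \<and>
     (\<forall>A B. N (A + B) \<le> N A + N B) \<and>
     (\<forall>W V A. cunitary W \<and> cunitary V \<longrightarrow> N (W ** A ** V) = N A)"

end

theory Submission
  imports Defs "HOL-Computational_Algebra.Fundamental_Theorem_Algebra"
begin


lemma sin_jordan:
  fixes x :: real assumes "0 \<le> x" "x \<le> pi/2"
  shows "2 / pi * x \<le> sin x"
proof -
  have conc: "concave_on {0..pi} sin"
    by (rule f''_le0_imp_concave[where f'=cos and f''="\<lambda>x. - sin x"])
       (auto intro!: derivative_eq_intros sin_ge_zero)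
  define t where "t = 2 / pi * x"
  have t: "0 \<le> t" "t \<le> 1" using assms pi_gt_zero by (auto simp: t_def field_simps)
  have "(1 - t) * sin 0 + t * sin (pi/2) \<le> sin ((1 - t) * 0 + t * (pi/2))"
    using concave_onD[OF conc, of t 0 "pi/2"] t pi_gt_zero by auto
  moreover have "t * (pi/2) = x" using pi_gt_zero by (simp add: t_def)
  ultimately show ?thesis by (simp add: t_def)
qed

lemma abs_le_cmod_one_minus_exp:
  fixes th :: real assumes "-pi \<le> th" "th \<le> pi"
  shows "\<bar>th\<bar> \<le> pi/2 * cmod (1 - exp (\<i> * complex_of_real th))"
proof -
  have "cmod (1 - exp (\<i> * complex_of_real th)) = 2 * \<bar>sin (th/2)\<bar>"
  proof -
    have "(cmod (1 - exp (\<i> * complex_of_real th)))^2 = (1 - cos th)^2 + (sin th)^2"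
      by (simp add: cmod_power2 exp_Euler cos_of_real sin_of_real)
    also have "\<dots> = 2 - 2 * cos th"
      using sin_cos_squared_add[of th] by (simp add: power2_eq_square algebra_simps)
    also have "\<dots> = (2 * \<bar>sin (th/2)\<bar>)^2"
      using cos_double_sin[of "th/2"] by (simp add: power2_eq_square algebra_simps)
    finally show ?thesis
      by (rule power2_eq_imp_eq) auto
  qed
  moreover have "\<bar>th\<bar> / pi \<le> \<bar>sin (th/2)\<bar>"
  proof (cases "0 \<le> th")
    case True
    then have "2/pi * (th/2) \<le> sin (th/2)" using assms by (intro sin_jordan) auto
    then show ?thesis using True by auto
  next
    case False
    then have "2/pi * (-th/2) \<le> sin (-th/2)" using assms by (intro sin_jordan) auto
    then show ?thesis using False by auto
  qed
  ultimately show ?thesis using pi_gt_zero by (simp add: field_simps)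
qed

lemma half_sum_unimodular:
  fixes z :: complex assumes "cmod z \<le> 1"
  shows "\<exists>u v. cmod u = 1 \<and> cmod v = 1 \<and> z = (u + v) / 2"
proof (cases "z = 0")
  case True then show ?thesis by (intro exI[of _ 1] exI[of _ "-1"]) auto
next
  case False
  define b where "b = arccos (cmod z)"
  have cb: "cos b = cmod z" unfolding b_def by (rule cos_arccos) (use assms norm_ge_zero[of z] in linarith)+
  define a where "a = Arg z"
  have z: "z = complex_of_real (cmod z) * exp (\<i> * complex_of_real a)"
    using Arg_eq[OF False] by (simp add: a_def)
  define u where "u = exp (\<i> * complex_of_real (a + b))"
  define v where "v = exp (\<i> * complex_of_real (a - b))"
  have "u + v = exp (\<i> * complex_of_real a) * (exp (\<i> * complex_of_real b) + exp (- (\<i> * complex_of_real b)))"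
    by (simp add: u_def v_def algebra_simps exp_add[symmetric] exp_diff[symmetric])
  also have "exp (\<i> * complex_of_real b) + exp (- (\<i> * complex_of_real b)) = 2 * complex_of_real (cos b)"
  proof -
    have "exp (- (\<i> * complex_of_real b)) = exp (\<i> * complex_of_real (-b))" by simp
    then show ?thesis by (simp only: exp_Euler) (simp add: cos_of_real sin_of_real)
  qed
  finally have "(u + v) / 2 = z" using z cb by (simp add: mult.commute)
  moreover have "cmod u = 1" "cmod v = 1" by (simp_all add: u_def v_def)
  ultimately show ?thesis by metis
qed



definition diagm :: "('n \<Rightarrow> complex) \<Rightarrow> complex^'n^'n" where
  "diagm a = (\<chi> i j. if i = j then a i else 0)"

lemma cadjoint_mult: "cadjoint (A ** B) = cadjoint B ** cadjoint (A :: complex^'n^'m)"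
  by (simp add: vec_eq_iff cadjoint_def matrix_matrix_mult_def mult.commute)

lemma cadjoint_cadjoint[simp]: "cadjoint (cadjoint A) = A"
  by (simp add: vec_eq_iff cadjoint_def)

lemma cadjoint_mat1[simp]: "cadjoint (mat 1 :: complex^'n^'n) = mat 1"
  by (simp add: vec_eq_iff cadjoint_def mat_def)

lemma cunitary_cadjoint: "cunitary W \<Longrightarrow> cunitary (cadjoint W)"
  by (simp add: cunitary_def)

lemma cunitary_mult: assumes "cunitary W" "cunitary V" shows "cunitary (W ** V)"
proof -
  have "cadjoint (W ** V) ** (W ** V) = cadjoint V ** (cadjoint W ** W) ** V"
    by (simp add: cadjoint_mult matrix_mul_assoc)
  moreover have "(W ** V) ** cadjoint (W ** V) = W ** (V ** cadjoint V) ** cadjoint W"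
    by (simp add: cadjoint_mult matrix_mul_assoc)
  ultimately show ?thesis using assms by (simp add: cunitary_def)
qed

lemma cunitary_mat1: "cunitary (mat 1)" by (simp add: cunitary_def)

lemma diagm_mult_left: "(diagm a ** A) $ i $ j = a i * A $ i $ j"
proof -
  have "\<And>k. (if i = k then a i else 0) * A $ k $ j = (if k = i then a i * A $ i $ j else 0)" by auto
  then show ?thesis by (simp add: diagm_def matrix_matrix_mult_def)
qed

lemma mult_diagm_right: "(A ** diagm a) $ i $ j = A $ i $ j * a j"
proof -
  have "\<And>k. A $ i $ k * (if k = j then a k else 0) = (if k = j then A $ i $ j * a j else 0)" by auto
  then show ?thesis by (simp add: diagm_def matrix_matrix_mult_def)
qed

lemma diagm_nth: "diagm a $ i $ j = (if i = j then a i else 0)"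
  by (simp add: diagm_def)

lemma diagm_mult: "diagm a ** diagm b = diagm (\<lambda>i. a i * b i)"
  by (simp add: vec_eq_iff diagm_mult_left diagm_nth)

lemma cadjoint_diagm: "cadjoint (diagm a) = diagm (\<lambda>i. cnj (a i))"
  by (simp add: vec_eq_iff cadjoint_def diagm_nth)

lemma diagm_one: "diagm (\<lambda>_. 1) = mat 1"
  by (simp add: vec_eq_iff diagm_nth mat_def)

lemma diagm_unitary: assumes "\<And>i. cmod (a i) = 1" shows "cunitary (diagm a)"
proof -
  have 1: "a i * cnj (a i) = 1" for i
    using complex_norm_square[of "a i"] assms[of i] by simp
  then have "cnj (a i) * a i = 1" "a i * cnj (a i) = 1" for i
    by (simp_all add: mult.commute)
  then show ?thesis by (simp add: cunitary_def cadjoint_diagm diagm_mult diagm_one)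
qed

lemma cmat_smult_nth: "cmat_smult c A $ i $ j = c * A $ i $ j"
  by (simp add: cmat_smult_def)

lemma diagm_sum: "finite S \<Longrightarrow> (\<Sum>k\<in>S. diagm (f k)) = diagm (\<lambda>i. \<Sum>k\<in>S. f k i)"
  by (simp add: vec_eq_iff diagm_nth sum_component)

context
  fixes N :: "complex^'n^'n \<Rightarrow> real"
  assumes N: "unitarily_invariant_norm N"
begin

lemma N_nonneg: "0 \<le> N A" using N by (simp add: unitarily_invariant_norm_def)
lemma N_zero[simp]: "N 0 = 0" using N by (simp add: unitarily_invariant_norm_def)
lemma N_smult: "N (cmat_smult c A) = cmod c * N A" using N by (simp add: unitarily_invariant_norm_def)
lemma N_add: "N (A + B) \<le> N A + N B" using N by (simp add: unitarily_invariant_norm_def)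
lemma N_unitary: "cunitary W \<Longrightarrow> cunitary V \<Longrightarrow> N (W ** A ** V) = N A"
  using N by (simp add: unitarily_invariant_norm_def)
lemma N_left: "cunitary W \<Longrightarrow> N (W ** A) = N A"
  using N_unitary[of W "mat 1" A] cunitary_mat1 by simp
lemma N_neg: "N (- A) = N A"
proof -
  have "- A = cmat_smult (-1) A" by (simp add: vec_eq_iff cmat_smult_nth)
  then show ?thesis by (simp add: N_smult)
qed
lemma N_diff: "N (A - B) \<le> N A + N B"
  using N_add[of A "-B"] by (simp add: N_neg)
lemma N_sum: "finite S \<Longrightarrow> N (\<Sum>k\<in>S. f k) \<le> (\<Sum>k\<in>S. N (f k))"
proof (induction S rule: finite_induct)
  case empty then show ?case by simp
next
  case (insert x F)
  then show ?case using N_add[of "f x" "sum f F"] by simp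
qed

lemma N_diag_contract:
  assumes c: "\<And>i. cmod (c i) \<le> r"
  shows "N (diagm c ** A) \<le> r * N A"
proof -
  have r0: "0 \<le> r" using c[of undefined] norm_ge_zero[of "c undefined"] by linarith
  show ?thesis
  proof (cases "r = 0")
    case True
    then have "c i = 0" for i using c[of i] by simp
    then have "diagm c ** A = 0" by (simp add: vec_eq_iff diagm_mult_left)
    then show ?thesis using True by simp
  next
    case False
    then have rp: "r > 0" using r0 by simp
    have "\<forall>i. \<exists>uv. cmod (fst uv) = 1 \<and> cmod (snd uv) = 1 \<and> c i / complex_of_real r = (fst uv + snd uv) / 2"
    proof
      fix i
      have "cmod (c i / complex_of_real r) \<le> 1" using c[of i] rp by (simp add: norm_divide)
      from half_sum_unimodular[OF this] show "\<exists>uv. cmod (fst uv) = 1 \<and> cmod (snd uv) = 1 \<and> c i / complex_of_real r = (fst uv + snd uv) / 2"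
        by force
    qed
    then obtain uv where uv: "\<And>i. cmod (fst (uv i)) = 1" "\<And>i. cmod (snd (uv i)) = 1"
      "\<And>i. c i / complex_of_real r = (fst (uv i) + snd (uv i)) / 2" by metis
    define u where "u i = fst (uv i)" for i
    define v where "v i = snd (uv i)" for i
    have ci: "c i = complex_of_real (r/2) * u i + complex_of_real (r/2) * v i" for i
      using uv(3)[of i] rp by (simp add: u_def v_def field_simps)
    have "diagm c ** A = cmat_smult (complex_of_real (r/2)) (diagm u ** A) + cmat_smult (complex_of_real (r/2)) (diagm v ** A)"
      by (simp add: vec_eq_iff diagm_mult_left cmat_smult_nth ci algebra_simps)
    then have "N (diagm c ** A) \<le> (r/2) * N (diagm u ** A) + (r/2) * N (diagm v ** A)"
      using N_add N_smult rp by (metis abs_of_pos half_gt_zero norm_of_real)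
    also have "N (diagm u ** A) = N A" using uv(1) by (intro N_left diagm_unitary) (simp add: u_def)
    also have "N (diagm v ** A) = N A" using uv(2) by (intro N_left diagm_unitary) (simp add: v_def)
    finally show ?thesis by simp
  qed
qed

end



definition pmat :: "('n \<Rightarrow> 'n) \<Rightarrow> complex^'n^'n" where
  "pmat p = (\<chi> i j. if j = p i then 1 else 0)"

lemma pmat_mult_left: "(pmat p ** A) $ i $ j = A $ (p i) $ j"
proof -
  have "\<And>k. (if k = p i then 1 else 0) * A $ k $ j = (if k = p i then A $ (p i) $ j else 0)" by auto
  then show ?thesis by (simp add: pmat_def matrix_matrix_mult_def)
qed

lemma mult_cadjoint_pmat: "(A ** cadjoint (pmat p)) $ i $ j = A $ i $ (p j)"
proof -
  have "\<And>k. A $ i $ k * cnj (if k = p j then 1 else 0) = (if k = p j then A $ i $ (p j) else 0)" by auto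
  then show ?thesis by (simp add: pmat_def cadjoint_def matrix_matrix_mult_def)
qed

lemma pmat_conj: assumes "bij p"
  shows "pmat p ** diagm a ** cadjoint (pmat p) = diagm (\<lambda>i. a (p i))"
  using bij_is_inj[OF assms]
  by (simp add: vec_eq_iff mult_cadjoint_pmat pmat_mult_left diagm_nth inj_eq)

lemma pmat_unitary: assumes "bij p" shows "cunitary (pmat p)"
proof -
  have inj: "inj p" using assms bij_is_inj by auto
  have "(pmat p ** cadjoint (pmat p)) $ i $ j = (if i = j then 1 else 0)" for i j
    using inj by (simp add: mult_cadjoint_pmat) (simp add: pmat_def inj_eq)
  then have 1: "pmat p ** cadjoint (pmat p) = mat 1"
    by (simp add: vec_eq_iff mat_def)
  then show ?thesis unfolding cunitary_def using matrix_left_right_inverse by blast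
qed

lemma modlem: "(c + (x::nat)) mod d = (c + y) mod d \<Longrightarrow> x < d \<Longrightarrow> y < d \<Longrightarrow> x = y"
proof -
  have *: "x = y" if "(c + (x::nat)) mod d = (c + y) mod d" "x < d" "y \<le> x" for x y
  proof -
    have "d dvd (c + x) - (c + y)" using that mod_eq_dvd_iff_nat[of "c+y" "c+x" d] by simp
    then have "d dvd x - y" by simp
    moreover have "x - y < d" using that by simp
    ultimately show ?thesis using that nat_dvd_not_less[of "x - y" d] by (cases "x - y = 0") auto
  qed
  assume "(c + (x::nat)) mod d = (c + y) mod d" "x < d" "y < d"
  then show "x = y" using *[of x y] *[of y x] by (cases "y \<le> x") auto
qed

lemma rot_bij:
  shows "bij_betw (\<lambda>k. (c + k) mod d) {0..<d} {0..<(d::nat)}"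
proof -
  have inj: "inj_on (\<lambda>k. (c + k) mod d) {0..<d}"
  proof (rule inj_onI)
    fix x y assume xy: "x \<in> {0..<d}" "y \<in> {0..<d}" "(c + x) mod d = (c + y) mod d"
    then show "x = y" using modlem[of c x d y] by simp
  qed
  have "(\<lambda>k. (c + k) mod d) ` {0..<d} \<subseteq> {0..<d}" by auto
  then show ?thesis using inj by (metis endo_inj_surj bij_betw_def finite_atLeastLessThan)
qed

lemma cyclic_perms:
  fixes a :: "'n::finite \<Rightarrow> complex"
  shows "\<exists>p :: nat \<Rightarrow> 'n \<Rightarrow> 'n. (\<forall>k. bij (p k)) \<and> (\<forall>x. (\<Sum>k<CARD('n). a (p k x)) = (\<Sum>i\<in>UNIV. a i))"
proof -
  define d where "d = CARD('n)"
  obtain e where e: "bij_betw e {0..<d} (UNIV :: 'n set)"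
    using ex_bij_betw_nat_finite[of "UNIV :: 'n set"] by (auto simp: d_def)
  define ie where "ie = the_inv_into {0..<d} e"
  have ie: "bij_betw ie UNIV {0..<d}" unfolding ie_def by (rule bij_betw_the_inv_into[OF e])
  define p where "p k x = e ((ie x + k) mod d)" for k x
  have "bij (p k)" for k
  proof -
    have "bij_betw (\<lambda>j. (k + j) mod d) {0..<d} {0..<d}" by (rule rot_bij)
    then have "bij_betw (\<lambda>j. (j + k) mod d) {0..<d} {0..<d}" by (simp add: add.commute)
    then have "bij_betw ((\<lambda>j. (j + k) mod d) \<circ> ie) UNIV {0..<d}" using ie bij_betw_trans by blast
    then have "bij (e \<circ> ((\<lambda>j. (j + k) mod d) \<circ> ie))" using e bij_betw_trans by blast
    moreover have "p k = e \<circ> ((\<lambda>j. (j + k) mod d) \<circ> ie)" by (simp add: p_def fun_eq_iff)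
    ultimately show ?thesis by simp
  qed
  moreover have "(\<Sum>k<d. a (p k x)) = (\<Sum>i\<in>UNIV. a i)" for x
  proof -
    have "ie x < d" using ie by (auto simp: bij_betw_def)
    have "(\<Sum>k<d. a (p k x)) = (\<Sum>k\<in>{0..<d}. (a \<circ> e) ((ie x + k) mod d))"
      by (simp add: p_def lessThan_atLeast0)
    also have "\<dots> = (\<Sum>j\<in>{0..<d}. (a \<circ> e) j)"
      by (rule sum.reindex_bij_betw[OF rot_bij])
    also have "\<dots> = (\<Sum>i\<in>UNIV. a i)"
      using sum.reindex_bij_betw[OF e, of a] by (simp add: comp_def)
    finally show ?thesis .
  qed
  ultimately have "(\<forall>k. bij (p k)) \<and> (\<forall>x. (\<Sum>k<d. a (p k x)) = (\<Sum>i\<in>UNIV. a i))" by blast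
  then show ?thesis unfolding d_def by (rule exI[of _ p])
qed

context
  fixes N :: "complex^'n^'n \<Rightarrow> real"
  assumes N: "unitarily_invariant_norm N"
begin

lemma N_mean_le:
  fixes a :: "'n \<Rightarrow> complex"
  shows "N (diagm (\<lambda>_. (\<Sum>i\<in>UNIV. a i) / of_nat CARD('n))) \<le> N (diagm a)"
proof -
  define d where "d = CARD('n)"
  have dpos: "d > 0" by (simp add: d_def)
  obtain p :: "nat \<Rightarrow> 'n \<Rightarrow> 'n" where p: "\<And>k. bij (p k)" "\<And>x. (\<Sum>k<CARD('n). a (p k x)) = (\<Sum>i\<in>UNIV. a i)"
    using cyclic_perms[of a] by blast
  define S where "S = (\<Sum>i\<in>UNIV. a i)"
  have "(\<Sum>k<d. diagm (\<lambda>i. a (p k i))) = diagm (\<lambda>_. S)"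
    by (simp add: diagm_sum p(2) S_def d_def)
  then have "N (diagm (\<lambda>_. S)) \<le> (\<Sum>k<d. N (diagm (\<lambda>i. a (p k i))))"
    using N_sum[OF N, of "{..<d}" "\<lambda>k. diagm (\<lambda>i. a (p k i))"] by simp
  also have "\<dots> = (\<Sum>k<d. N (diagm a))"
  proof (rule sum.cong[OF refl])
    fix k
    show "N (diagm (\<lambda>i. a (p k i))) = N (diagm a)"
      using N_unitary[OF N pmat_unitary[OF p(1)[of k]] cunitary_cadjoint[OF pmat_unitary[OF p(1)[of k]]], of "diagm a"]
      by (simp add: pmat_conj[OF p(1)])
  qed
  also have "\<dots> = real d * N (diagm a)" by simp
  finally have 1: "N (diagm (\<lambda>_. S)) \<le> real d * N (diagm a)" .
  have "diagm (\<lambda>_. S / of_nat d) = cmat_smult (1 / of_nat d) (diagm (\<lambda>_. S))"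
    by (simp add: vec_eq_iff diagm_nth cmat_smult_nth)
  then have "N (diagm (\<lambda>_. S / of_nat d)) = cmod (1 / of_nat d) * N (diagm (\<lambda>_. S))"
    using N_smult[OF N] by metis
  then have "N (diagm (\<lambda>_. S / of_nat d)) = N (diagm (\<lambda>_. S)) / real d"
    by (simp add: norm_divide)
  also have "\<dots> \<le> N (diagm a)" using 1 dpos by (simp add: field_simps)
  finally show ?thesis by (simp add: S_def d_def)
qed

end



definition cip :: "complex^'n \<Rightarrow> complex^'n \<Rightarrow> complex" where
  "cip x y = (\<Sum>i\<in>UNIV. cnj (x$i) * y$i)"

lemma cip_add_right: "cip x (y + z) = cip x y + cip x z"
  by (simp add: cip_def algebra_simps sum.distrib)
lemma cip_diff_right: "cip x (y - z) = cip x y - cip x z"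
  by (simp add: cip_def algebra_simps sum_subtractf)
lemma cip_smult_right: "cip x (c *s y) = c * cip x y"
  by (simp add: cip_def sum_distrib_left algebra_simps)
lemma cip_smult_left: "cip (c *s x) y = cnj c * cip x y"
  by (simp add: cip_def sum_distrib_left algebra_simps)
lemma cip_zero_right[simp]: "cip x 0 = 0"
  by (simp add: cip_def)
lemma cip_sum_right: "cip x (\<Sum>k\<in>S. f k) = (\<Sum>k\<in>S. cip x (f k))"
  by (induction S rule: infinite_finite_induct) (simp_all add: cip_add_right)
lemma cip_conj: "cip y x = cnj (cip x y)"
  by (simp add: cip_def mult.commute)

lemma cip_self: "cip x x = complex_of_real (\<Sum>i\<in>UNIV. (cmod (x$i))^2)"
proof -
  have "cnj (x$i) * x$i = complex_of_real ((cmod (x$i))^2)" for i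
    using complex_norm_square[of "x$i"] by (simp add: mult.commute)
  then show ?thesis by (simp add: cip_def)
qed

lemma cip_self_eq0: assumes "cip x x = 0" shows "x = 0"
proof -
  have "complex_of_real (\<Sum>i\<in>UNIV. (cmod (x$i))^2) = 0" using assms cip_self by metis
  then have "(\<Sum>i\<in>UNIV. (cmod (x$i))^2) = 0" by (simp only: of_real_eq_0_iff)
  then have "\<forall>i\<in>UNIV. (cmod (x$i))^2 = 0" by (subst (asm) sum_nonneg_eq_0_iff) auto
  then show ?thesis by (simp add: vec_eq_iff)
qed

lemma cip_adj: "cip x (A *v y) = cip (cadjoint A *v x) y"
proof -
  have "cip x (A *v y) = (\<Sum>i\<in>UNIV. \<Sum>j\<in>UNIV. cnj (x$i) * A$i$j * y$j)"
    by (simp add: cip_def matrix_vector_mult_def sum_distrib_left mult.assoc)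
  also have "\<dots> = (\<Sum>j\<in>UNIV. \<Sum>i\<in>UNIV. cnj (x$i) * A$i$j * y$j)" by (rule sum.swap)
  also have "\<dots> = cip (cadjoint A *v x) y"
    by (simp add: cip_def matrix_vector_mult_def cadjoint_def sum_distrib_left sum_distrib_right ac_simps)
  finally show ?thesis .
qed

definition oeig :: "complex^'n^'n \<Rightarrow> (complex^'n) set \<Rightarrow> bool" where
  "oeig U B \<longleftrightarrow> (\<forall>b\<in>B. cip b b = 1) \<and> (\<forall>b\<in>B. \<forall>b'\<in>B. b \<noteq> b' \<longrightarrow> cip b b' = 0)
     \<and> (\<forall>b\<in>B. \<exists>l. U *v b = l *s b)"

lemma oeig_indep: assumes B: "oeig U B" shows "vec.independent B"
proof
  assume "vec.dependent B"
  then obtain t u v where t: "finite t" "t \<subseteq> B" "(\<Sum>w\<in>t. u w *s w) = 0" and v: "v \<in> t" "u v \<noteq> 0"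
    unfolding vec.dependent_explicit by blast
  have "0 = cip v (\<Sum>w\<in>t. u w *s w)" using t by simp
  also have "\<dots> = (\<Sum>w\<in>t. u w * cip v w)" by (simp add: cip_sum_right cip_smult_right)
  also have "\<dots> = (\<Sum>w\<in>t. if w = v then u v else 0)"
  proof (rule sum.cong[OF refl])
    fix w assume "w \<in> t"
    then have "w \<in> B" "v \<in> B" using t v by auto
    then show "u w * cip v w = (if w = v then u v else 0)"
      using B unfolding oeig_def by auto
  qed
  also have "\<dots> = u v" using t v by simp
  finally show False using v by simp
qed

lemma oeig_card: fixes B :: "(complex^'n) set" assumes "oeig U B" shows "finite B" "card B \<le> CARD('n)"
proof -
  have "finite B \<and> card B \<le> vec.dim B" using vec.independent_bound_general[OF oeig_indep[OF assms]] .
  moreover have "vec.dim B \<le> vec.dim (UNIV :: (complex^'n) set)" by (rule vec.dim_subset) simp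
  moreover have "vec.dim (UNIV :: (complex^'n) set) = CARD('n)" by (rule vec_dim_card)
  ultimately show "finite B" "card B \<le> CARD('n)" by linarith+
qed

lemma oeig_complement:
  fixes B :: "(complex^'n) set"
  assumes B: "oeig U B" and c: "card B < CARD('n)"
  shows "\<exists>y::complex^'n. y \<noteq> 0 \<and> (\<forall>b\<in>B. cip b y = 0)"
proof -
  have fin: "finite B" using oeig_card[OF B] by simp
  have "vec.span B \<noteq> UNIV"
  proof
    assume "vec.span B = UNIV"
    then have "vec.dim (UNIV :: (complex^'n) set) = vec.dim B" by (metis vec.dim_span)
    also have "\<dots> = card B" using vec.dim_span_eq_card_independent[OF oeig_indep[OF B]] vec.dim_span by metis
    moreover have "vec.dim (UNIV :: (complex^'n) set) = CARD('n)" by (rule vec_dim_card)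
    ultimately show False using c by linarith
  qed
  then obtain x where x: "x \<notin> vec.span B" by blast
  define y where "y = x - (\<Sum>b\<in>B. cip b x *s b)"
  have "y \<noteq> 0"
  proof
    assume "y = 0"
    then have "x = (\<Sum>b\<in>B. cip b x *s b)" by (simp add: y_def)
    moreover have "(\<Sum>b\<in>B. cip b x *s b) \<in> vec.span B"
      by (intro vec.span_sum vec.span_scale vec.span_base)
    ultimately show False using x by simp
  qed
  moreover have "cip b' y = 0" if b': "b' \<in> B" for b'
  proof -
    have "(\<Sum>b\<in>B. cip b' (cip b x *s b)) = (\<Sum>b\<in>B. if b = b' then cip b' x else 0)"
    proof (rule sum.cong[OF refl])
      fix b assume "b \<in> B"
      then show "cip b' (cip b x *s b) = (if b = b' then cip b' x else 0)"
        using B b' unfolding oeig_def by (auto simp: cip_smult_right)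
    qed
    then show ?thesis using b' fin by (simp add: y_def cip_diff_right cip_sum_right)
  qed
  ultimately show ?thesis by blast
qed

lemma oeig_invariant:
  assumes U: "cunitary U" and B: "oeig U B" and b: "b \<in> B" and y: "cip b y = 0"
  shows "cip b (U *v y) = 0"
proof -
  obtain l where l: "U *v b = l *s b" using B b unfolding oeig_def by blast
  have bb: "b \<noteq> 0" using B b unfolding oeig_def by auto
  have bk: "cadjoint U *v (U *v b) = b"
    using U by (simp add: cunitary_def matrix_vector_mul_assoc)
  then have "l *s (cadjoint U *v b) = b" by (simp add: l vector_scalar_commute)
  then have l0: "l \<noteq> 0" using bb by auto
  have "cadjoint U *v b = (1 / l) *s b"
    using \<open>l *s (cadjoint U *v b) = b\<close> l0
    by (metis vector_smult_assoc divide_self_if nonzero_divide_eq_eq vector_smult_lid mult.commute)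
  then show ?thesis by (simp add: cip_adj cip_smult_left y)
qed



definition Ep :: "complex^'n^'n \<Rightarrow> complex poly \<Rightarrow> complex^'n \<Rightarrow> complex^'n" where
  "Ep U p v = (\<Sum>i\<le>degree p. coeff p i *s (mpow U i *v v))"

lemma Ep_alt: "degree p \<le> n \<Longrightarrow> Ep U p v = (\<Sum>i\<le>n. coeff p i *s (mpow U i *v v))"
  unfolding Ep_def by (rule sum.mono_neutral_left) (auto simp: coeff_eq_0)

lemma Ep_add: "Ep U (p + q) v = Ep U p v + Ep U q v"
proof -
  define n where "n = max (degree p) (degree q)"
  have "degree (p + q) \<le> n" unfolding n_def by (rule degree_add_le_max)
  then show ?thesis
    by (simp add: Ep_alt[of _ n] n_def coeff_add vector_sadd_rdistrib sum.distrib)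
qed

lemma Ep_smult: "Ep U (smult c p) v = c *s Ep U p v"
proof -
  have "degree (smult c p) \<le> degree p" by (rule degree_smult_le)
  then show ?thesis
    by (simp add: Ep_alt[of _ "degree p"] vec.scale_sum_right vector_smult_assoc)
qed

lemma Ep_diff: "Ep U (p - q) v = Ep U p v - Ep U q v"
proof -
  have "p - q = p + smult (-1) q" by simp
  then show ?thesis by (simp only: Ep_add Ep_smult) (simp add: vec.scale_minus_left)
qed

lemma mpow_Suc_mv: "mpow U (Suc i) *v v = U *v (mpow U i *v v)"
  by (simp add: matrix_vector_mul_assoc)

lemma Ep_pCons0: "Ep U (pCons 0 p) v = U *v Ep U p v"
proof -
  have "degree (pCons 0 p) \<le> Suc (degree p)" by (rule degree_pCons_le)
  then have "Ep U (pCons 0 p) v = (\<Sum>i\<le>Suc (degree p). coeff (pCons 0 p) i *s (mpow U i *v v))"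
    by (rule Ep_alt)
  also have "\<dots> = (\<Sum>i\<le>degree p. coeff p i *s (mpow U (Suc i) *v v))"
    by (subst sum.atMost_Suc_shift) simp
  also have "\<dots> = U *v Ep U p v"
    by (simp add: Ep_def vec.sum vector_scalar_commute matrix_vector_mul_assoc)
  finally show ?thesis .
qed

lemma Ep_const: "Ep U [:c:] v = c *s v"
  by (simp add: Ep_def)

lemma Ep_linfac: "Ep U ([:-z, 1:] * q) v = U *v Ep U q v - z *s Ep U q v"
proof -
  have "[:-z, 1:] * q = smult (-z) q + pCons 0 q" by simp
  then show ?thesis by (simp add: Ep_diff Ep_smult Ep_pCons0)
qed

lemma Ep_monom: "Ep U (monom 1 j) v = mpow U j *v v"
proof -
  have "degree (monom (1::complex) j) \<le> j" by (simp add: degree_monom_eq)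
  then have "Ep U (monom 1 j) v = (\<Sum>i\<le>j. coeff (monom 1 j) i *s (mpow U i *v v))" by (rule Ep_alt)
  also have "\<dots> = (\<Sum>i\<le>j. if i = j then mpow U j *v v else 0)"
    by (rule sum.cong) (auto simp: coeff_monom)
  finally show ?thesis by simp
qed

lemma krylov:
  fixes U :: "complex^'n^'n" and y :: "complex^'n"
  shows "\<exists>p. p \<noteq> 0 \<and> Ep U p y = 0"
proof -
  define d where "d = CARD('n)"
  define f where "f i = mpow U i *v y" for i
  show ?thesis
  proof (cases "inj_on f {..d}")
    case True
    define K where "K = f ` {..d}"
    have finK: "finite K" by (simp add: K_def)
    have cK: "card K = d + 1" using True by (simp add: K_def card_image)
    have "vec.dim K \<le> vec.dim (UNIV :: (complex^'n) set)" by (rule vec.dim_subset) simp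
    moreover have "vec.dim (UNIV :: (complex^'n) set) = CARD('n)" by (rule vec_dim_card)
    ultimately have "vec.dim K < card K" using cK by (simp add: d_def)
    then have "vec.dependent K" by (intro vec.dependent_biggerset_general)
    then obtain u where u: "\<exists>v\<in>K. u v \<noteq> 0" "(\<Sum>v\<in>K. u v *s v) = 0"
      using vec.dependent_finite[OF finK] by blast
    have sum0: "(\<Sum>i\<le>d. u (f i) *s f i) = 0"
      using u(2) sum.reindex[OF True, of "\<lambda>v. u v *s v"] by (simp add: K_def)
    define p where "p = (\<Sum>i\<le>d. monom (u (f i)) i)"
    have cp: "coeff p k = (if k \<le> d then u (f k) else 0)" for k
      by (simp add: p_def coeff_sum coeff_monom)
    have dp: "degree p \<le> d" by (rule degree_le) (simp add: cp)
    have "Ep U p y = (\<Sum>i\<le>d. coeff p i *s f i)" using Ep_alt[OF dp] by (simp add: f_def)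
    also have "\<dots> = 0" using sum0 by (simp add: cp)
    finally have "Ep U p y = 0" .
    moreover have "p \<noteq> 0"
    proof
      assume "p = 0"
      from u(1) obtain i where "i \<le> d" "u (f i) \<noteq> 0" by (auto simp: K_def)
      then have "coeff p i \<noteq> 0" by (simp add: cp)
      then show False using \<open>p = 0\<close> by simp
    qed
    ultimately show ?thesis by blast
  next
    case False
    then obtain i j where ij: "i \<le> d" "j \<le> d" "i \<noteq> j" "f i = f j"
      unfolding inj_on_def by auto
    define p where "p = monom (1::complex) i - monom 1 j"
    have "coeff p i = 1" using ij by (simp add: p_def coeff_monom)
    then have "p \<noteq> 0" by auto
    moreover have "Ep U p y = 0"
      using ij by (simp only: p_def Ep_diff Ep_monom f_def[symmetric]) simp
    ultimately show ?thesis by blast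
  qed
qed

lemma eigen_from_poly:
  fixes U :: "complex^'n^'n"
  assumes P: "\<And>q. P (Ep U q y)" and y: "y \<noteq> 0"
  shows "p \<noteq> 0 \<Longrightarrow> Ep U p y = 0 \<Longrightarrow> \<exists>v. v \<noteq> 0 \<and> P v \<and> (\<exists>l. U *v v = l *s v)"
proof (induction "degree p" arbitrary: p rule: less_induct)
  case less
  show ?case
  proof (cases "degree p = 0")
    case True
    then obtain c where c: "p = [:c:]" by (metis degree_eq_zeroE)
    then have "c \<noteq> 0" using less.prems by auto
    then have "Ep U p y \<noteq> 0" using c y by (simp add: Ep_const)
    then show ?thesis using less.prems by simp
  next
    case False
    then have "\<not> constant (poly p)" by (simp add: constant_degree)
    then obtain z where "poly p z = 0" using fundamental_theorem_of_algebra by blast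
    then have "[:-z, 1:] dvd p" by (simp add: poly_eq_0_iff_dvd)
    then obtain q where pq: "p = [:-z, 1:] * q" by (rule dvdE)
    have q0: "q \<noteq> 0" using pq less.prems by auto
    have "degree ([:-z,1:] * q) = degree [:-z,1:] + degree q" by (rule degree_mult_eq) (use q0 in auto)
    then have "degree p = degree q + 1" using pq by simp
    then have dq: "degree q < degree p" by simp
    have "Ep U ([:-z, 1:] * q) y = 0" using less.prems(2) by (simp only: pq)
    then have E: "U *v Ep U q y - z *s Ep U q y = 0" by (simp only: Ep_linfac)
    show ?thesis
    proof (cases "Ep U q y = 0")
      case True
      then show ?thesis using less.hyps[OF dq q0] by blast
    next
      case False
      moreover have "U *v Ep U q y = z *s Ep U q y" using E by simp
      ultimately show ?thesis using P[of q] by blast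
    qed
  qed
qed



lemma ortho_Ep:
  assumes U: "cunitary U" and B: "oeig U B" and y: "\<forall>b\<in>B. cip b y = 0"
  shows "\<forall>b\<in>B. cip b (Ep U q y) = 0"
proof -
  have *: "\<forall>b\<in>B. cip b (mpow U i *v y) = 0" for i
  proof (induction i)
    case 0 then show ?case using y by simp
  next
    case (Suc i) then show ?case using oeig_invariant[OF U B] by (simp add: matrix_vector_mul_assoc[symmetric])
  qed
  show ?thesis using * by (simp add: Ep_def cip_sum_right cip_smult_right)
qed

lemma oeig_extend:
  fixes U :: "complex^'n^'n" and B :: "(complex^'n) set"
  assumes U: "cunitary U" and B: "oeig U B" and c: "card B < CARD('n)"
  shows "\<exists>w. w \<notin> B \<and> oeig U (insert w B)"
proof -
  obtain y where y: "y \<noteq> 0" "\<forall>b\<in>B. cip b y = 0" using oeig_complement[OF B c] by blast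
  obtain p where p: "p \<noteq> 0" "Ep U p y = 0" using krylov by blast
  obtain v l where v: "v \<noteq> 0" "\<forall>b\<in>B. cip b v = 0" "U *v v = l *s v"
    using eigen_from_poly[of "\<lambda>v. \<forall>b\<in>B. cip b v = 0" U y p] ortho_Ep[OF U B y(2)] y(1) p
    by blast
  define r where "r = (\<Sum>i\<in>UNIV. (cmod (v$i))^2)"
  have cvv: "cip v v = complex_of_real r" by (simp add: r_def cip_self)
  have "r \<ge> 0" unfolding r_def by (intro sum_nonneg) simp
  moreover have "r \<noteq> 0" using cvv cip_self_eq0[of v] v(1) by auto
  ultimately have rp: "r > 0" by simp
  define c where "c = complex_of_real (1 / sqrt r)"
  define w where "w = c *s v"
  have 1: "cip w w = cnj c * c * cip v v" by (simp add: w_def cip_smult_left cip_smult_right)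
  have 2: "cnj c * c * cip v v = complex_of_real ((1 / sqrt r) * (1 / sqrt r) * r)"
    by (simp only: c_def cvv complex_cnj_complex_of_real of_real_mult)
  have 3: "(1 / sqrt r) * (1 / sqrt r) * r = 1" using rp by (simp add: field_simps)
  have ww: "cip w w = 1" using 1 2 3 by simp
  have bw: "\<forall>b\<in>B. cip b w = 0" using v(2) by (simp add: w_def cip_smult_right)
  have wb: "\<forall>b\<in>B. cip w b = 0" using bw cip_conj by (metis complex_cnj_zero)
  have Uw: "U *v w = l *s w" using v(3) by (simp add: w_def vector_scalar_commute vector_smult_assoc mult.commute)
  have wB: "w \<notin> B" using bw ww by auto
  have "oeig U (insert w B)"
    using B ww bw wb Uw unfolding oeig_def by auto
  then show ?thesis using wB by blast
qed

lemma spectral_unitary: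
  fixes U :: "complex^'n^'n"
  assumes U: "cunitary U"
  shows "\<exists>W lam. cunitary W \<and> U = W ** diagm lam ** cadjoint W"
proof -
  have "oeig U {}" by (simp add: oeig_def)
  moreover have "\<forall>B. oeig U B \<longrightarrow> card B < CARD('n) + 1" using oeig_card by fastforce
  ultimately obtain B where B: "oeig U B" and max: "\<And>B'. oeig U B' \<Longrightarrow> card B' \<le> card B"
    using Lattices_Big.ex_has_greatest_nat[of "oeig U" "{}" card "CARD('n) + 1"] by blast
  have finB: "finite B" using oeig_card[OF B] by simp
  have cB: "card B = CARD('n)"
  proof (rule ccontr)
    assume "card B \<noteq> CARD('n)"
    then have "card B < CARD('n)" using oeig_card[OF B] by simp
    then obtain w where "w \<notin> B" "oeig U (insert w B)" using oeig_extend[OF U B] by blast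
    then show False using max[of "insert w B"] finB by simp
  qed
  obtain g where g: "bij_betw g (UNIV :: 'n set) B"
    using finite_same_card_bij[of "UNIV :: 'n set" B] finB cB by auto
  define W :: "complex^'n^'n" where "W = (\<chi> i j. g j $ i)"
  have gB: "g i \<in> B" for i using g by (auto simp: bij_betw_def)
  have ginj: "g i = g j \<longleftrightarrow> i = j" for i j using g by (auto simp: bij_betw_def inj_on_def)
  have "(cadjoint W ** W) $ i $ j = cip (g i) (g j)" for i j
    by (simp add: W_def cadjoint_def matrix_matrix_mult_def cip_def)
  also have "cip (g i) (g j) = (if i = j then 1 else 0)" for i j
    using B gB[of i] gB[of j] ginj[of i j] unfolding oeig_def by auto
  finally have "cadjoint W ** W = mat 1" by (simp add: vec_eq_iff mat_def)
  then have WU: "cunitary W" unfolding cunitary_def using matrix_left_right_inverse by blast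
  define lam where "lam j = (SOME l. U *v g j = l *s g j)" for j
  have lam: "U *v g j = lam j *s g j" for j
    unfolding lam_def by (rule someI_ex) (use B gB[of j] in \<open>auto simp: oeig_def\<close>)
  have "(U ** W) $ i $ j = (U *v g j) $ i" for i j
    by (simp add: W_def matrix_matrix_mult_def matrix_vector_mult_def)
  then have UW: "U ** W = W ** diagm lam"
    by (simp add: vec_eq_iff lam mult_diagm_right W_def mult.commute)
  have "U = U ** (W ** cadjoint W)" using WU by (simp add: cunitary_def)
  also have "\<dots> = W ** diagm lam ** cadjoint W" by (simp add: matrix_mul_assoc UW)
  finally show ?thesis using WU by blast
qed



lemma vec_sums:
  fixes f :: "nat \<Rightarrow> 'a::real_normed_vector^'n"
  assumes "\<And>i. (\<lambda>n. f n $ i) sums (l $ i)"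
  shows "f sums l"
proof -
  have "(\<lambda>n. \<chi> i. \<Sum>k<n. f k $ i) \<longlonglongrightarrow> (\<chi> i. l $ i)"
    using assms unfolding sums_def by (intro tendsto_vec_lambda) auto
  moreover have "(\<lambda>n. \<chi> i. \<Sum>k<n. f k $ i) = (\<lambda>n. \<Sum>k<n. f k)"
    by (simp add: fun_eq_iff vec_eq_iff sum_component)
  ultimately show ?thesis unfolding sums_def by simp
qed

lemma conj_entry:
  "(W ** diagm b ** cadjoint W) $ i $ j = (\<Sum>l\<in>UNIV. W$i$l * cnj (W$j$l) * b l)"
  by (simp add: matrix_matrix_mult_def[of "W ** diagm b"] mult_diagm_right cadjoint_def ac_simps)

lemma mpow_diagm: "mpow (diagm a) n = diagm (\<lambda>i. a i ^ n)"
  by (induction n) (simp_all add: diagm_one diagm_mult)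

lemma mpow_conj:
  assumes W: "cunitary W"
  shows "mpow (W ** D ** cadjoint W) n = W ** mpow D n ** cadjoint W"
proof (induction n)
  case 0 then show ?case using W by (simp add: cunitary_def)
next
  case (Suc n)
  have "mpow (W ** D ** cadjoint W) (Suc n) = W ** D ** (cadjoint W ** W) ** mpow D n ** cadjoint W"
    using Suc by (simp add: matrix_mul_assoc)
  also have "\<dots> = W ** mpow D (Suc n) ** cadjoint W" using W by (simp add: cunitary_def matrix_mul_assoc)
  finally show ?case .
qed

lemma mexp_conj:
  assumes W: "cunitary W"
  shows "mexp (W ** diagm a ** cadjoint W) = W ** diagm (\<lambda>i. exp (a i)) ** cadjoint W"
proof -
  have "(\<lambda>k. (1 / fact k) *\<^sub>R mpow (W ** diagm a ** cadjoint W) k) sums (W ** diagm (\<lambda>i. exp (a i)) ** cadjoint W)"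
  proof (intro vec_sums)
    fix i j
    have "(\<lambda>k. \<Sum>l\<in>UNIV. W$i$l * cnj (W$j$l) * (a l ^ k /\<^sub>R fact k)) sums (\<Sum>l\<in>UNIV. W$i$l * cnj (W$j$l) * exp (a l))"
      by (intro sums_sum sums_mult exp_converges)
    moreover have "((1 / fact k) *\<^sub>R mpow (W ** diagm a ** cadjoint W) k) $ i $ j = (\<Sum>l\<in>UNIV. W$i$l * cnj (W$j$l) * (a l ^ k /\<^sub>R fact k))" for k
      by (simp only: vector_scaleR_component mpow_conj[OF W] mpow_diagm conj_entry)
         (simp add: scaleR_sum_right scaleR_conv_of_real ac_simps divide_inverse sum_distrib_left)
    ultimately show "(\<lambda>k. ((1 / fact k) *\<^sub>R mpow (W ** diagm a ** cadjoint W) k) $ i $ j) sums ((W ** diagm (\<lambda>i. exp (a i)) ** cadjoint W) $ i $ j)"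
      by (simp add: conj_entry)
  qed
  then show ?thesis unfolding mexp_def by (rule sums_unique[symmetric])
qed



lemma smult_conj: "cmat_smult c (W ** diagm a ** cadjoint W) = W ** diagm (\<lambda>j. c * a j) ** cadjoint W"
  by (simp add: vec_eq_iff cmat_smult_nth conj_entry sum_distrib_left ac_simps)

theorem mainTheorem6:
  fixes U :: "complex^'n^'n"
  assumes "cunitary U"
  shows "\<exists>H :: complex^'n^'n. \<exists>\<phi> :: real.
           chermitian H \<and> trace H = 0 \<and>
           mexp (cmat_smult (- \<i>) H) = cmat_smult (exp (\<i> * complex_of_real \<phi>)) U \<and>
           (\<forall>N. unitarily_invariant_norm N \<longrightarrow> N H \<le> pi * N (mat 1 - U))"
proof -
  obtain W lam where W: "cunitary W" and UW: "U = W ** diagm lam ** cadjoint W"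
    using spectral_unitary[OF assms] by blast
  have WW: "cadjoint W ** W = mat 1" "W ** cadjoint W = mat 1" using W by (auto simp: cunitary_def)
  have Deq: "diagm lam = cadjoint W ** U ** W"
    using WW by (simp add: UW matrix_mul_assoc) (simp add: matrix_mul_assoc[symmetric])
  have "cunitary (diagm lam)" unfolding Deq
    by (intro cunitary_mult cunitary_cadjoint W assms)
  then have "cadjoint (diagm lam) ** diagm lam = mat 1" by (simp add: cunitary_def)
  then have "diagm (\<lambda>i. cnj (lam i) * lam i) = diagm (\<lambda>_. 1)"
    by (simp add: cadjoint_diagm diagm_mult diagm_one)
  then have "diagm (\<lambda>i. cnj (lam i) * lam i) $ i $ i = diagm (\<lambda>_. 1) $ i $ i" for i by simp
  then have "cnj (lam i) * lam i = 1" for i by (simp add: diagm_nth)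
  then have "complex_of_real ((cmod (lam i))^2) = 1" for i
    using complex_norm_square[of "lam i"] by (simp add: mult.commute)
  then have "(cmod (lam i))^2 = 1" for i by (simp only: of_real_eq_1_iff)
  then have lam1: "cmod (lam i) = 1" for i
    using power2_eq_1_iff[of "cmod (lam i)"] norm_ge_zero[of "lam i"] by auto
  define th where "th i = Arg (lam i)" for i
  have lamth: "lam i = exp (\<i> * complex_of_real (th i))" for i
    using lam1[of i] complex_norm_eq_1_exp_eq by (simp add: th_def)
  have thb: "-pi \<le> th i" "th i \<le> pi" for i using Arg_bounded[of "lam i"] by (auto simp: th_def)
  define d where "d = CARD('n)"
  have dpos: "real d > 0" by (simp add: d_def)
  define m where "m = (\<Sum>i\<in>UNIV. th i) / real d"
  define h where "h i = complex_of_real (m - th i)" for i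
  define H where "H = W ** diagm h ** cadjoint W"
  define \<phi> where "\<phi> = - m"
  have hc: "(\<lambda>i. cnj (h i)) = h" by (simp add: h_def fun_eq_iff)
  have herm: "chermitian H"
    by (simp add: chermitian_def H_def cadjoint_mult cadjoint_diagm hc matrix_mul_assoc)
  have "trace H = trace (diagm h ** (cadjoint W ** W))"
    unfolding H_def by (metis trace_mul_sym matrix_mul_assoc)
  also have "\<dots> = (\<Sum>i\<in>UNIV. h i)" by (simp add: WW trace_def diagm_nth)
  also have "\<dots> = complex_of_real (real d * m - (\<Sum>i\<in>UNIV. th i))"
    by (simp add: h_def sum_subtractf d_def)
  also have "real d * m - (\<Sum>i\<in>UNIV. th i) = 0" using dpos by (simp add: m_def)
  finally have tr: "trace H = 0" by simp
  have ex: "mexp (cmat_smult (- \<i>) H) = cmat_smult (exp (\<i> * complex_of_real \<phi>)) U"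
  proof -
    have "mexp (cmat_smult (- \<i>) H) = W ** diagm (\<lambda>j. exp (- \<i> * h j)) ** cadjoint W"
      by (simp add: H_def smult_conj mexp_conj[OF W])
    also have "(\<lambda>j. exp (- \<i> * h j)) = (\<lambda>j. exp (\<i> * complex_of_real \<phi>) * lam j)"
    proof
      fix j
      have "- \<i> * h j = \<i> * complex_of_real \<phi> + \<i> * complex_of_real (th j)"
        by (simp add: h_def \<phi>_def algebra_simps)
      then show "exp (- \<i> * h j) = exp (\<i> * complex_of_real \<phi>) * lam j"
        by (simp add: exp_add lamth)
    qed
    also have "W ** diagm (\<lambda>j. exp (\<i> * complex_of_real \<phi>) * lam j) ** cadjoint W = cmat_smult (exp (\<i> * complex_of_real \<phi>)) U"
      by (simp add: UW smult_conj)
    finally show ?thesis .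
  qed
  have nrm: "N H \<le> pi * N (mat 1 - U)" if N: "unitarily_invariant_norm N" for N
  proof -
    define t where "t i = complex_of_real (th i)" for i
    have NH: "N H = N (diagm h)" unfolding H_def by (rule N_unitary[OF N W cunitary_cadjoint[OF W]])
    have "mat 1 - U = W ** diagm (\<lambda>j. 1 - lam j) ** cadjoint W"
    proof -
      have "(W ** cadjoint W) $ i $ j = (\<Sum>l\<in>UNIV. W$i$l * cnj (W$j$l))" for i j
        by (simp add: matrix_matrix_mult_def cadjoint_def)
      then show ?thesis using WW(2)
        by (simp add: vec_eq_iff UW conj_entry algebra_simps sum_subtractf)
    qed
    then have NU: "N (mat 1 - U) = N (diagm (\<lambda>j. 1 - lam j))"
      using N_unitary[OF N W cunitary_cadjoint[OF W]] by simp
    have "diagm h = diagm (\<lambda>_. (\<Sum>i\<in>UNIV. t i) / of_nat CARD('n)) - diagm t"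
      by (simp add: vec_eq_iff diagm_nth h_def t_def m_def d_def)
    then have "N (diagm h) \<le> N (diagm (\<lambda>_. (\<Sum>i\<in>UNIV. t i) / of_nat CARD('n))) + N (diagm t)"
      using N_diff[OF N] by simp
    also have "\<dots> \<le> 2 * N (diagm t)" using N_mean_le[OF N, of t] by simp
    also have "N (diagm t) \<le> pi / 2 * N (diagm (\<lambda>j. 1 - lam j))"
    proof -
      define c where "c j = t j / (1 - lam j)" for j
      have "diagm t = diagm c ** diagm (\<lambda>j. 1 - lam j)"
      proof -
        have "t j = c j * (1 - lam j)" for j
        proof (cases "lam j = 1")
          case True then show ?thesis by (simp add: t_def th_def Arg_1)
        next
          case False then show ?thesis by (simp add: c_def)
        qed
        then have "t = (\<lambda>j. c j * (1 - lam j))" by (simp add: fun_eq_iff)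
        then show ?thesis by (simp add: diagm_mult)
      qed
      moreover have "cmod (c j) \<le> pi / 2" for j
      proof (cases "lam j = 1")
        case True then show ?thesis by (simp add: c_def)
      next
        case False
        then have pos: "cmod (1 - lam j) > 0" by simp
        have "\<bar>th j\<bar> \<le> pi / 2 * cmod (1 - lam j)"
          using abs_le_cmod_one_minus_exp[OF thb[of j]] by (simp add: lamth)
        then show ?thesis using pos by (simp add: c_def t_def norm_divide field_simps)
      qed
      ultimately show ?thesis using N_diag_contract[OF N, of c "pi/2" "diagm (\<lambda>j. 1 - lam j)"] by simp
    qed
    finally show ?thesis using NH NU by simp
  qed
  show ?thesis using herm tr ex nrm by blast
qed

end
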